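(* Let $k$ be a field, $\mathsf{E}$ a left strictly locally finite $k$-linear category, and suppose a standard frontier $X_y$ has been chosen for every object $y$. Then for every object $y\in\mathsf{E}$ and every integer $n\ge1$, the degree $n$ standard frontier $X_y^{(n)}$ is a frontier for $y$.
   Context: A small $k$-linear category $\mathsf{E}$ has $k$-vector spaces $\operatorname{Hom}_\mathsf{E}(x,y)$, $k$-bilinear associative composition and identities with $\mathrm{id}_x\ne0$. Write $x\preceq y$ if there are $n\ge1$ and objects $x=z_0,\dots,z_n=y$ with $\operatorname{Hom}_\mathsf{E}(z_{i-1},z_i)\neq0$ for all $i$; $x\prec y$ means $x\preceq y$ and not $y\preceq x$. $\mathsf{E}$ is locally finite if all Hom spaces are finite-dimensional and every $\{z:x\preceq z\preceq y\}$ is finite. A finite set of objects $X$ with $x\prec y$ for all $x\in X$ is a frontier for $y$ if there is a finite set of objects $W$ such that every morphism $f:z\to y$ with $z\prec y$ and $z\notin W$ can be written $f=\sum_{i=1}^nh_ig_i$ ($n\ge0$) with $g_i:z\to x_i$, $h_i:x_i\to y$, $x_i\in X$. $\mathsf{E}$ is left strictly locally finite if it is locally finite and every object $y$ has a frontier with $W=\emptyset$; a chosen such frontier $X_y$ (for each $y$) is called the standard frontier of $y$. Define $X_y^{(1)}=X_y$ and $X_y^{(n+1)}=\bigcup_{z\in X_y^{(n)}}X_z$. *)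

theory Defs
  imports Main
begin

text \<open>A small k-linear category, presented concretely: a set of objects, for each
pair of objects a set of morphisms (elements of an ambient type 'm), and the
k-vector-space operations and composition on these Hom sets.
  cmp x y z h g  is the composite  h \<circ> g  of  g : x \<rightarrow> y  and  h : y \<rightarrow> z.\<close>

record ('o, 'm, 'k) klcat =
  Ob    :: "'o set"
  Hom   :: "'o \<Rightarrow> 'o \<Rightarrow> 'm set"
  cmp   :: "'o \<Rightarrow> 'o \<Rightarrow> 'o \<Rightarrow> 'm \<Rightarrow> 'm \<Rightarrow> 'm"
  madd  :: "'o \<Rightarrow> 'o \<Rightarrow> 'm \<Rightarrow> 'm \<Rightarrow> 'm"
  msmul :: "'o \<Rightarrow> 'o \<Rightarrow> 'k \<Rightarrow> 'm \<Rightarrow> 'm"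
  mzero :: "'o \<Rightarrow> 'o \<Rightarrow> 'm"
  ident :: "'o \<Rightarrow> 'm"

definition klinear_cat :: "('o, 'm, 'k::field) klcat \<Rightarrow> bool" where
  "klinear_cat E \<longleftrightarrow>
    \<comment> \<open>each Hom x y is a k-vector space\<close>
    (\<forall>x\<in>Ob E. \<forall>y\<in>Ob E.
       mzero E x y \<in> Hom E x y \<and>
       (\<forall>f\<in>Hom E x y. \<forall>g\<in>Hom E x y. madd E x y f g \<in> Hom E x y) \<and>
       (\<forall>c. \<forall>f\<in>Hom E x y. msmul E x y c f \<in> Hom E x y) \<and>
       (\<forall>f\<in>Hom E x y. \<forall>g\<in>Hom E x y. \<forall>h\<in>Hom E x y.
          madd E x y (madd E x y f g) h = madd E x y f (madd E x y g h)) \<and>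
       (\<forall>f\<in>Hom E x y. \<forall>g\<in>Hom E x y. madd E x y f g = madd E x y g f) \<and>
       (\<forall>f\<in>Hom E x y. madd E x y (mzero E x y) f = f) \<and>
       (\<forall>f\<in>Hom E x y. \<exists>g\<in>Hom E x y. madd E x y f g = mzero E x y) \<and>
       (\<forall>c. \<forall>f\<in>Hom E x y. \<forall>g\<in>Hom E x y.
          msmul E x y c (madd E x y f g) = madd E x y (msmul E x y c f) (msmul E x y c g)) \<and>
       (\<forall>c d. \<forall>f\<in>Hom E x y.
          msmul E x y (c + d) f = madd E x y (msmul E x y c f) (msmul E x y d f)) \<and>
       (\<forall>c d. \<forall>f\<in>Hom E x y. msmul E x y (c * d) f = msmul E x y c (msmul E x y d f)) \<and>
       (\<forall>f\<in>Hom E x y. msmul E x y 1 f = f)) \<and>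
    \<comment> \<open>identities, nonzero\<close>
    (\<forall>x\<in>Ob E. ident E x \<in> Hom E x x \<and> ident E x \<noteq> mzero E x x) \<and>
    \<comment> \<open>composition: closed, bilinear, associative, unital\<close>
    (\<forall>x\<in>Ob E. \<forall>y\<in>Ob E. \<forall>z\<in>Ob E.
       (\<forall>g\<in>Hom E x y. \<forall>h\<in>Hom E y z. cmp E x y z h g \<in> Hom E x z) \<and>
       (\<forall>g\<in>Hom E x y. \<forall>h\<in>Hom E y z. \<forall>h'\<in>Hom E y z.
          cmp E x y z (madd E y z h h') g = madd E x z (cmp E x y z h g) (cmp E x y z h' g)) \<and>
       (\<forall>g\<in>Hom E x y. \<forall>g'\<in>Hom E x y. \<forall>h\<in>Hom E y z.
          cmp E x y z h (madd E x y g g') = madd E x z (cmp E x y z h g) (cmp E x y z h g')) \<and>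
       (\<forall>c. \<forall>g\<in>Hom E x y. \<forall>h\<in>Hom E y z.
          cmp E x y z (msmul E y z c h) g = msmul E x z c (cmp E x y z h g)) \<and>
       (\<forall>c. \<forall>g\<in>Hom E x y. \<forall>h\<in>Hom E y z.
          cmp E x y z h (msmul E x y c g) = msmul E x z c (cmp E x y z h g))) \<and>
    (\<forall>w\<in>Ob E. \<forall>x\<in>Ob E. \<forall>y\<in>Ob E. \<forall>z\<in>Ob E.
       \<forall>f\<in>Hom E w x. \<forall>g\<in>Hom E x y. \<forall>h\<in>Hom E y z.
         cmp E w y z h (cmp E w x y g f) = cmp E w x z (cmp E x y z h g) f) \<and>
    (\<forall>x\<in>Ob E. \<forall>y\<in>Ob E. \<forall>f\<in>Hom E x y.
       cmp E x y y (ident E y) f = f \<and> cmp E x x y f (ident E x) = f)"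

definition msum :: "('o, 'm, 'k) klcat \<Rightarrow> 'o \<Rightarrow> 'o \<Rightarrow> 'm list \<Rightarrow> 'm" where
  "msum E x y fs = foldr (madd E x y) fs (mzero E x y)"

definition hom_fin_dim :: "('o, 'm, 'k) klcat \<Rightarrow> 'o \<Rightarrow> 'o \<Rightarrow> bool" where
  "hom_fin_dim E x y \<longleftrightarrow> (\<exists>S. finite S \<and> S \<subseteq> Hom E x y \<and>
     (\<forall>f\<in>Hom E x y. \<exists>cs :: ('k \<times> 'm) list. set (map snd cs) \<subseteq> S \<and>
        f = msum E x y (map (\<lambda>(c, s). msmul E x y c s) cs)))"

definition hom_nz :: "('o, 'm, 'k) klcat \<Rightarrow> 'o \<Rightarrow> 'o \<Rightarrow> bool" where
  "hom_nz E x y \<longleftrightarrow> x \<in> Ob E \<and> y \<in> Ob E \<and> (\<exists>f\<in>Hom E x y. f \<noteq> mzero E x y)"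

definition preceq :: "('o, 'm, 'k) klcat \<Rightarrow> 'o \<Rightarrow> 'o \<Rightarrow> bool" where
  "preceq E x y \<longleftrightarrow> (hom_nz E)\<^sup>+\<^sup>+ x y"

definition prec :: "('o, 'm, 'k) klcat \<Rightarrow> 'o \<Rightarrow> 'o \<Rightarrow> bool" where
  "prec E x y \<longleftrightarrow> preceq E x y \<and> \<not> preceq E y x"

definition locally_finite :: "('o, 'm, 'k) klcat \<Rightarrow> bool" where
  "locally_finite E \<longleftrightarrow>
     (\<forall>x\<in>Ob E. \<forall>y\<in>Ob E. hom_fin_dim E x y) \<and>
     (\<forall>x\<in>Ob E. \<forall>y\<in>Ob E. finite {z\<in>Ob E. preceq E x z \<and> preceq E z y})"

definition factors_through :: "('o, 'm, 'k) klcat \<Rightarrow> 'o set \<Rightarrow> 'o \<Rightarrow> 'o \<Rightarrow> 'm \<Rightarrow> bool" where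
  "factors_through E X z y f \<longleftrightarrow>
     (\<exists>ts :: ('o \<times> 'm \<times> 'm) list.
        (\<forall>(x, g, h) \<in> set ts. x \<in> X \<and> g \<in> Hom E z x \<and> h \<in> Hom E x y) \<and>
        f = msum E z y (map (\<lambda>(x, g, h). cmp E z x y h g) ts))"

definition frontier_with :: "('o, 'm, 'k) klcat \<Rightarrow> 'o set \<Rightarrow> 'o set \<Rightarrow> 'o \<Rightarrow> bool" where
  "frontier_with E X W y \<longleftrightarrow>
     finite X \<and> X \<subseteq> Ob E \<and> (\<forall>x\<in>X. prec E x y) \<and> finite W \<and>
     (\<forall>z\<in>Ob E. prec E z y \<and> z \<notin> W \<longrightarrow> (\<forall>f\<in>Hom E z y. factors_through E X z y f))"

definition is_frontier :: "('o, 'm, 'k) klcat \<Rightarrow> 'o set \<Rightarrow> 'o \<Rightarrow> bool" where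
  "is_frontier E X y \<longleftrightarrow> (\<exists>W. frontier_with E X W y)"

definition left_strictly_locally_finite :: "('o, 'm, 'k) klcat \<Rightarrow> bool" where
  "left_strictly_locally_finite E \<longleftrightarrow> locally_finite E \<and>
     (\<forall>y\<in>Ob E. \<exists>X. frontier_with E X {} y)"

text \<open>Indexing: std_frontier_deg Xs y 0 = {y} (auxiliary),
  so that std_frontier_deg Xs y 1 = Xs y and
  std_frontier_deg Xs y (n+1) = \<Union>_{z \<in> deg n} Xs z, matching X_y^{(n)} for n \<ge> 1.\<close>
primrec std_frontier_deg :: "('o \<Rightarrow> 'o set) \<Rightarrow> 'o \<Rightarrow> nat \<Rightarrow> 'o set" where
  "std_frontier_deg Xs y 0 = {y}"
| "std_frontier_deg Xs y (Suc n) = (\<Union>z\<in>std_frontier_deg Xs y n. Xs z)"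

end

theory Submission
  imports Defs
begin

lemmas kc_all = klinear_cat_def[THEN iffD1]
lemmas kc_A = kc_all[THEN conjunct1]
lemmas kc_vs = kc_A[THEN bspec, THEN bspec]
lemmas kc_B = kc_all[THEN conjunct2, THEN conjunct1]
lemmas kc_C = kc_all[THEN conjunct2, THEN conjunct2, THEN conjunct1]
lemmas kc_c = kc_C[THEN bspec, THEN bspec, THEN bspec]
lemmas kc_D = kc_all[THEN conjunct2, THEN conjunct2, THEN conjunct2, THEN conjunct1]
lemma kc_zero: "klinear_cat E \<Longrightarrow> x\<in>Ob E \<Longrightarrow> y\<in>Ob E \<Longrightarrow> mzero E x y \<in> Hom E x y"
  using kc_vs by metis
lemma kc_add: "klinear_cat E \<Longrightarrow> x\<in>Ob E \<Longrightarrow> y\<in>Ob E \<Longrightarrow> f \<in> Hom E x y \<Longrightarrow> g \<in> Hom E x y \<Longrightarrow> madd E x y f g \<in> Hom E x y"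
  using kc_vs by metis
lemma kc_assoc: "klinear_cat E \<Longrightarrow> x\<in>Ob E \<Longrightarrow> y\<in>Ob E \<Longrightarrow> f \<in> Hom E x y \<Longrightarrow> g \<in> Hom E x y \<Longrightarrow> h \<in> Hom E x y \<Longrightarrow>
   madd E x y (madd E x y f g) h = madd E x y f (madd E x y g h)"
  using kc_vs by metis
lemma kc_comm: "klinear_cat E \<Longrightarrow> x\<in>Ob E \<Longrightarrow> y\<in>Ob E \<Longrightarrow> f \<in> Hom E x y \<Longrightarrow> g \<in> Hom E x y \<Longrightarrow>
   madd E x y f g = madd E x y g f"
  using kc_vs by metis
lemma kc_zl: "klinear_cat E \<Longrightarrow> x\<in>Ob E \<Longrightarrow> y\<in>Ob E \<Longrightarrow> f \<in> Hom E x y \<Longrightarrow> madd E x y (mzero E x y) f = f"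
  using kc_vs by metis
lemma kc_neg: "klinear_cat E \<Longrightarrow> x\<in>Ob E \<Longrightarrow> y\<in>Ob E \<Longrightarrow> f \<in> Hom E x y \<Longrightarrow> \<exists>g\<in>Hom E x y. madd E x y f g = mzero E x y"
  using kc_vs by metis
lemma kc_cmp: "klinear_cat E \<Longrightarrow> x\<in>Ob E \<Longrightarrow> y\<in>Ob E \<Longrightarrow> z\<in>Ob E \<Longrightarrow> g \<in> Hom E x y \<Longrightarrow> h \<in> Hom E y z \<Longrightarrow> cmp E x y z h g \<in> Hom E x z"
  using kc_c by metis
lemma kc_cmp_add: "klinear_cat E \<Longrightarrow> x\<in>Ob E \<Longrightarrow> y\<in>Ob E \<Longrightarrow> z\<in>Ob E \<Longrightarrow> g \<in> Hom E x y \<Longrightarrow> g' \<in> Hom E x y \<Longrightarrow> h \<in> Hom E y z \<Longrightarrow>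
   cmp E x y z h (madd E x y g g') = madd E x z (cmp E x y z h g) (cmp E x y z h g')"
  using kc_c by metis
lemma kc_cassoc: "klinear_cat E \<Longrightarrow> w\<in>Ob E \<Longrightarrow> x\<in>Ob E \<Longrightarrow> y\<in>Ob E \<Longrightarrow> z\<in>Ob E \<Longrightarrow>
   f\<in>Hom E w x \<Longrightarrow> g\<in>Hom E x y \<Longrightarrow> h\<in>Hom E y z \<Longrightarrow>
         cmp E w y z h (cmp E w x y g f) = cmp E w x z (cmp E x y z h g) f"
  using kc_D by metis

lemma kc_cmp_zero:
  assumes E: "klinear_cat E" and ob: "x\<in>Ob E" "y\<in>Ob E" "z\<in>Ob E" and h: "h \<in> Hom E y z"
  shows "cmp E x y z h (mzero E x y) = mzero E x z"
proof -
  let ?a = "cmp E x y z h (mzero E x y)"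
  have z0: "mzero E x y \<in> Hom E x y" using kc_zero[OF E ob(1,2)] .
  have aH: "?a \<in> Hom E x z" using kc_cmp[OF E ob z0 h] .
  have "?a = cmp E x y z h (madd E x y (mzero E x y) (mzero E x y))"
    using kc_zl[OF E ob(1,2) z0] by simp
  also have "\<dots> = madd E x z ?a ?a" using kc_cmp_add[OF E ob z0 z0 h] .
  finally have aa: "?a = madd E x z ?a ?a" .
  obtain b where b: "b \<in> Hom E x z" "madd E x z ?a b = mzero E x z" using kc_neg[OF E ob(1,3) aH] by blast
  have "mzero E x z = madd E x z (madd E x z ?a ?a) b" using aa b by simp
  also have "\<dots> = madd E x z ?a (madd E x z ?a b)" using kc_assoc[OF E ob(1,3) aH aH b(1)] .
  also have "\<dots> = madd E x z ?a (mzero E x z)" using b by simp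
  also have "\<dots> = ?a" using kc_comm[OF E ob(1,3) aH kc_zero[OF E ob(1,3)]] kc_zl[OF E ob(1,3) aH] by simp
  finally show ?thesis by simp
qed

lemma msum_in:
  assumes E: "klinear_cat E" and ob: "x\<in>Ob E" "y\<in>Ob E" and "set L \<subseteq> Hom E x y"
  shows "msum E x y L \<in> Hom E x y"
  using assms(4) by (induction L) (auto simp: msum_def kc_zero[OF E ob] kc_add[OF E ob])

lemma msum_append:
  assumes E: "klinear_cat E" and ob: "x\<in>Ob E" "y\<in>Ob E" and "set A \<subseteq> Hom E x y" "set B \<subseteq> Hom E x y"
  shows "msum E x y (A @ B) = madd E x y (msum E x y A) (msum E x y B)"
  using assms(4)
proof (induction A)
  case Nil
  then show ?case using kc_zl[OF E ob msum_in[OF E ob assms(5)]] by (simp add: msum_def)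
next
  case (Cons a A)
  have "msum E x y ((a # A) @ B) = madd E x y a (msum E x y (A @ B))" by (simp add: msum_def)
  also have "\<dots> = madd E x y a (madd E x y (msum E x y A) (msum E x y B))" using Cons by simp
  also have "\<dots> = madd E x y (madd E x y a (msum E x y A)) (msum E x y B)"
    using kc_assoc[OF E ob, of a "msum E x y A" "msum E x y B"] Cons.prems
      msum_in[OF E ob, of A] msum_in[OF E ob assms(5)] by simp
  finally show ?case by (simp add: msum_def)
qed

lemma cmp_msum:
  assumes E: "klinear_cat E" and ob: "x\<in>Ob E" "y\<in>Ob E" "z\<in>Ob E" and h: "h \<in> Hom E y z"
    and "set L \<subseteq> Hom E x y"
  shows "cmp E x y z h (msum E x y L) = msum E x z (map (cmp E x y z h) L)"
  using assms(6)
proof (induction L)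
  case Nil
  then show ?case using kc_cmp_zero[OF E ob h] by (simp add: msum_def)
next
  case (Cons a L)
  have "cmp E x y z h (msum E x y (a # L)) = cmp E x y z h (madd E x y a (msum E x y L))" by (simp add: msum_def)
  also have "\<dots> = madd E x z (cmp E x y z h a) (cmp E x y z h (msum E x y L))"
    using kc_cmp_add[OF E ob, of a "msum E x y L" h] Cons.prems msum_in[OF E ob(1,2), of L] h by simp
  finally show ?case using Cons by (simp add: msum_def)
qed

lemma ft_zero: "factors_through E Y z y (mzero E z y)"
  unfolding factors_through_def by (rule exI[of _ "[]"]) (simp add: msum_def)

lemma ft_add:
  assumes E: "klinear_cat E" and ob: "z\<in>Ob E" "y\<in>Ob E" and Y: "Y \<subseteq> Ob E"
    and f1: "factors_through E Y z y f1" and f2: "factors_through E Y z y f2"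
  shows "factors_through E Y z y (madd E z y f1 f2)"
proof -
  obtain t1 where t1: "\<forall>(x, g, h) \<in> set t1. x \<in> Y \<and> g \<in> Hom E z x \<and> h \<in> Hom E x y"
    "f1 = msum E z y (map (\<lambda>(x, g, h). cmp E z x y h g) t1)" using f1 unfolding factors_through_def by blast
  obtain t2 where t2: "\<forall>(x, g, h) \<in> set t2. x \<in> Y \<and> g \<in> Hom E z x \<and> h \<in> Hom E x y"
    "f2 = msum E z y (map (\<lambda>(x, g, h). cmp E z x y h g) t2)" using f2 unfolding factors_through_def by blast
  have s: "set (map (\<lambda>(x, g, h). cmp E z x y h g) t) \<subseteq> Hom E z y"
    if "\<forall>(x, g, h) \<in> set t. x \<in> Y \<and> g \<in> Hom E z x \<and> h \<in> Hom E x y" for t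
  proof (clarsimp)
    fix a b c assume "(a, b, c) \<in> set t"
    then have "a \<in> Y \<and> b \<in> Hom E z a \<and> c \<in> Hom E a y" using that by fastforce
    then show "cmp E z a y c b \<in> Hom E z y" using Y kc_cmp[OF E ob(1) _ ob(2)] by blast
  qed
  show ?thesis unfolding factors_through_def
    apply (rule exI[of _ "t1 @ t2"])
    using t1 t2 msum_append[OF E ob s[OF t1(1)] s[OF t2(1)]] by auto
qed

lemma ft_cmp:
  assumes E: "klinear_cat E" and ob: "z\<in>Ob E" "x\<in>Ob E" "y\<in>Ob E" and Y: "Y \<subseteq> Ob E" "Y \<subseteq> Y'"
    and h: "h \<in> Hom E x y" and g: "factors_through E Y z x g"
  shows "factors_through E Y' z y (cmp E z x y h g)"
proof -
  obtain t where t: "\<forall>(w, g, h) \<in> set t. w \<in> Y \<and> g \<in> Hom E z w \<and> h \<in> Hom E w x"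
    "g = msum E z x (map (\<lambda>(w, g, h). cmp E z w x h g) t)" using g unfolding factors_through_def by blast
  have s: "set (map (\<lambda>(w, g, h). cmp E z w x h g) t) \<subseteq> Hom E z x"
  proof (clarsimp)
    fix a b c assume "(a, b, c) \<in> set t"
    then have "a \<in> Y \<and> b \<in> Hom E z a \<and> c \<in> Hom E a x" using t(1) by fastforce
    then show "cmp E z a x c b \<in> Hom E z x" using Y kc_cmp[OF E ob(1) _ ob(2)] by blast
  qed
  have "cmp E z x y h g = msum E z y (map (cmp E z x y h) (map (\<lambda>(w, g, h). cmp E z w x h g) t))"
    using t(2) cmp_msum[OF E ob h s] by simp
  also have "map (cmp E z x y h) (map (\<lambda>(w, g, h). cmp E z w x h g) t)
     = map (\<lambda>(w, g, h'). cmp E z w y h' g) (map (\<lambda>(w, g, h'). (w, g, cmp E w x y h h')) t)"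
  proof -
    have "\<forall>p\<in>set t. (cmp E z x y h \<circ> (\<lambda>(w, g, h). cmp E z w x h g)) p
       = ((\<lambda>(w, g, h'). cmp E z w y h' g) \<circ> (\<lambda>(w, g, h'). (w, g, cmp E w x y h h'))) p"
    proof
      fix p assume p: "p \<in> set t"
      obtain a b c where abc: "p = (a, b, c)" by (cases p) auto
      then have "a \<in> Y \<and> b \<in> Hom E z a \<and> c \<in> Hom E a x" using t(1) p by fastforce
      then show "(cmp E z x y h \<circ> (\<lambda>(w, g, h). cmp E z w x h g)) p
       = ((\<lambda>(w, g, h'). cmp E z w y h' g) \<circ> (\<lambda>(w, g, h'). (w, g, cmp E w x y h h'))) p"
        using abc Y kc_cassoc[OF E ob(1) _ ob(2,3) _ _ h] by auto
    qed
    then show ?thesis by simp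
  qed
  finally have eq: "cmp E z x y h g = msum E z y (map (\<lambda>(w, g, h'). cmp E z w y h' g) (map (\<lambda>(w, g, h'). (w, g, cmp E w x y h h')) t))" .
  have mem: "\<forall>(w, g, h') \<in> set (map (\<lambda>(w, g, h'). (w, g, cmp E w x y h h')) t). w \<in> Y' \<and> g \<in> Hom E z w \<and> h' \<in> Hom E w y"
  proof (clarsimp)
    fix a b c assume "(a, b, c) \<in> set t"
    then have "a \<in> Y \<and> b \<in> Hom E z a \<and> c \<in> Hom E a x" using t(1) by fastforce
    then show "a \<in> Y' \<and> b \<in> Hom E z a \<and> cmp E a x y h c \<in> Hom E a y"
      using Y kc_cmp[OF E _ ob(2,3) _ h] by blast
  qed
  show ?thesis unfolding factors_through_def using eq mem by blast
qed

lemma preceq_trans: "preceq E a b \<Longrightarrow> preceq E b c \<Longrightarrow> preceq E a c"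
  unfolding preceq_def by (rule tranclp_trans)

lemma step:
  assumes E: "klinear_cat E" and lf: "locally_finite E"
    and Xs: "\<forall>y\<in>Ob E. frontier_with E (Xs y) {} y"
    and fr: "frontier_with E X W y" and y: "y \<in> Ob E"
  shows "frontier_with E (\<Union>x\<in>X. Xs x) (W \<union> (\<Union>x\<in>X. {w\<in>Ob E. preceq E x w \<and> preceq E w x})) y"
proof -
  have fX: "finite X" "X \<subseteq> Ob E" "\<forall>x\<in>X. prec E x y" "finite W"
    and fac: "\<forall>z\<in>Ob E. prec E z y \<and> z \<notin> W \<longrightarrow> (\<forall>f\<in>Hom E z y. factors_through E X z y f)"
    using fr unfolding frontier_with_def by auto
  have Xsx: "finite (Xs x)" "Xs x \<subseteq> Ob E" "\<forall>w\<in>Xs x. prec E w x"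
    "\<forall>z\<in>Ob E. prec E z x \<longrightarrow> (\<forall>f\<in>Hom E z x. factors_through E (Xs x) z x f)" if "x \<in> Ob E" for x
    using Xs that unfolding frontier_with_def by auto
  let ?Y = "\<Union>x\<in>X. Xs x"
  let ?W = "W \<union> (\<Union>x\<in>X. {w\<in>Ob E. preceq E x w \<and> preceq E w x})"
  have Y: "?Y \<subseteq> Ob E" using Xsx fX by blast
  have "finite ?Y" using Xsx fX by blast
  moreover have "\<forall>w\<in>?Y. prec E w y"
  proof
    fix w assume "w \<in> ?Y"
    then obtain x where x: "x \<in> X" "w \<in> Xs x" by blast
    have "prec E w x" "prec E x y" using Xsx x fX by blast+
    then show "prec E w y" unfolding prec_def using preceq_trans by metis
  qed
  moreover have "finite ?W"
  proof -
    have "finite {w\<in>Ob E. preceq E x w \<and> preceq E w x}" if "x \<in> X" for x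
      using lf that fX(2) unfolding locally_finite_def by blast
    then show ?thesis using fX(1,4) by blast
  qed
  moreover have "\<forall>f\<in>Hom E z y. factors_through E ?Y z y f" if z: "z \<in> Ob E" "prec E z y" "z \<notin> ?W" for z
  proof
    fix f assume f: "f \<in> Hom E z y"
    have "factors_through E X z y f" using fac z(1,2,3) f by blast
    then obtain t where t: "\<forall>(x, g, h) \<in> set t. x \<in> X \<and> g \<in> Hom E z x \<and> h \<in> Hom E x y"
      "f = msum E z y (map (\<lambda>(x, g, h). cmp E z x y h g) t)" unfolding factors_through_def by blast
    have "factors_through E ?Y z y (msum E z y (map (\<lambda>(x, g, h). cmp E z x y h g) t))"
      using t(1)
    proof (induction t)
      case Nil
      then show ?case using ft_zero by (simp add: msum_def)
    next
      case (Cons a t)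
      obtain x g h where a: "a = (x, g, h)" by (cases a) auto
      have xg: "x \<in> X" "g \<in> Hom E z x" "h \<in> Hom E x y" using Cons.prems a by auto
      have xO: "x \<in> Ob E" using xg fX by blast
      have ft1: "factors_through E ?Y z y (cmp E z x y h g)"
      proof (cases "g = mzero E z x")
        case True
        then show ?thesis using kc_cmp_zero[OF E z(1) xO y xg(3)] ft_zero by simp
      next
        case False
        then have "hom_nz E z x" unfolding hom_nz_def using xg(2) z(1) xO by blast
        then have "preceq E z x" unfolding preceq_def by (rule tranclp.r_into_trancl)
        moreover have "\<not> preceq E x z"
        proof
          assume "preceq E x z"
          then have "z \<in> {w\<in>Ob E. preceq E x w \<and> preceq E w x}" using z(1) calculation by simp
          then show False using z(3) xg(1) by blast
        qed
        ultimately have "prec E z x" unfolding prec_def by simp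
        then have "factors_through E (Xs x) z x g" using Xsx(4)[OF xO] z xg by blast
        then show ?thesis using ft_cmp[OF E z(1) xO y Xsx(2)[OF xO] _ xg(3)] xg by blast
      qed
      have "msum E z y (map (\<lambda>(x, g, h). cmp E z x y h g) (a # t))
         = madd E z y (cmp E z x y h g) (msum E z y (map (\<lambda>(x, g, h). cmp E z x y h g) t))"
        using a by (simp add: msum_def)
      then show ?case using ft_add[OF E z(1) y Y ft1] Cons by simp
    qed
    then show "factors_through E ?Y z y f" using t by simp
  qed
  ultimately show ?thesis unfolding frontier_with_def using Y fX by blast
qed

theorem lemma4p6:
  fixes E :: "('o, 'm, 'k::field) klcat"
    and Xs :: "'o \<Rightarrow> 'o set"
  assumes "klinear_cat E"
    and "left_strictly_locally_finite E"
    and "\<forall>y\<in>Ob E. frontier_with E (Xs y) {} y"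
  shows "\<forall>y\<in>Ob E. \<forall>n::nat. n \<ge> 1 \<longrightarrow> is_frontier E (std_frontier_deg Xs y n) y"
proof (intro ballI allI impI)
  fix y n assume y: "y \<in> Ob E" and n: "(n::nat) \<ge> 1"
  have lf: "locally_finite E" using assms(2) unfolding left_strictly_locally_finite_def by simp
  have "\<exists>W. frontier_with E (std_frontier_deg Xs y (Suc m)) W y" for m
  proof (induction m)
    case 0
    then show ?case using assms(3) y by auto
  next
    case (Suc m)
    then obtain W where "frontier_with E (std_frontier_deg Xs y (Suc m)) W y" by blast
    from step[OF assms(1) lf assms(3) this y] show ?case by auto
  qed
  moreover obtain m where "n = Suc m" using n by (cases n) auto
  ultimately show "is_frontier E (std_frontier_deg Xs y n) y" unfolding is_frontier_def by blast
qed

end
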